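(* Let $\mathcal H$ be the Hessian of an admissible Hamiltonian. Then for all $x,y\in\mathbb R^{2n}$, $J(x)\,\mathcal H\,J(y)=J(y)\,\mathcal H\,J(x)$.
   Context: Fix an integer $n\ge 2$. Points of $\mathbb R^{2n}$ are $x=(x_1,\dots,x_{2n})^{T}$; write $u=(x_1,\dots,x_n)^T$. Let $X(u)$ be the $n\times n$ matrix with entries $X(u)_{ij}=x_{k}$ where $k\in\{1,\dots,n\}$, $k\equiv i+j-1 \pmod n$, and let $J(x)=\begin{pmatrix}0&X(u)\\-X(u)&0\end{pmatrix}$. Let $\mathcal P$ be the $n\times n$ cyclic shift matrix ($\mathcal P_{i,i+1}=1$ for $1\le i\le n-1$, $\mathcal P_{n,1}=1$, all other entries $0$) and $A=\begin{pmatrix}\mathcal P&0\\0&\mathcal P\end{pmatrix}$. An admissible Hamiltonian is a homogeneous quadratic form $H(x)=\tfrac12 x^T\mathcal H x$ with a constant symmetric matrix $\mathcal H=\nabla^2H$ satisfying $A\mathcal H=\mathcal H A^T$. *)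

theory Defs
  imports "Jordan_Normal_Form.Matrix"
begin

text \<open>Indices are 0-based. For x in R^(2n) (a vector of dimension 2n),
  u = (x_0,...,x_{n-1}); the 1-based rule k = i+j-1 (mod n) becomes
  X(u)_{ij} = x_{(i+j) mod n} in 0-based indexing.\<close>

definition Xmat :: "nat \<Rightarrow> real vec \<Rightarrow> real mat" where
  "Xmat n x = mat n n (\<lambda>(i,j). x $ ((i + j) mod n))"

definition Jmat :: "nat \<Rightarrow> real vec \<Rightarrow> real mat" where
  "Jmat n x = four_block_mat (0\<^sub>m n n) (Xmat n x) (- Xmat n x) (0\<^sub>m n n)"

text \<open>Cyclic shift: P_{i,i+1} = 1 for 1 <= i <= n-1, P_{n,1} = 1 (1-based),
  i.e. P_{i,(i+1) mod n} = 1 in 0-based indexing.\<close>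
definition shiftP :: "nat \<Rightarrow> real mat" where
  "shiftP n = mat n n (\<lambda>(i,j). if j = (i + 1) mod n then 1 else 0)"

definition Amat :: "nat \<Rightarrow> real mat" where
  "Amat n = four_block_mat (shiftP n) (0\<^sub>m n n) (0\<^sub>m n n) (shiftP n)"

definition admissible_hessian :: "nat \<Rightarrow> real mat \<Rightarrow> bool" where
  "admissible_hessian n H \<longleftrightarrow> H \<in> carrier_mat (2*n) (2*n) \<and> H\<^sup>T = H \<and>
     Amat n * H = H * (Amat n)\<^sup>T"

end

theory Submission imports Defs begin

lemma modback: assumes "i < (n::nat)" "a < n" shows "((a + (n - i)) mod n + i) mod n = a"
    "((a + i) mod n + (n - i)) mod n = a" "(i + (a + (n - i)) mod n) mod n = a"
proof -
  have "((a + (n - i)) mod n + i) mod n = (a + (n - i) + i) mod n" by (simp add: mod_add_left_eq)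
  also have "\<dots> = (a + n) mod n" using assms by simp
  finally show "((a + (n - i)) mod n + i) mod n = a" using assms by simp
  have "((a + i) mod n + (n - i)) mod n = (a + i + (n - i)) mod n" by (simp add: mod_add_left_eq)
  also have "\<dots> = (a + n) mod n" using assms by simp
  finally show "((a + i) mod n + (n - i)) mod n = a" using assms by simp
  have "(i + (a + (n - i)) mod n) mod n = (i + (a + (n - i))) mod n" by (simp add: mod_add_right_eq)
  also have "\<dots> = (a + n) mod n" using assms by simp
  finally show "(i + (a + (n - i)) mod n) mod n = a" using assms by simp
qed

lemma rot: assumes "i < (n::nat)"
  shows "(\<Sum>k<n. f k) = (\<Sum>a<n. f ((a + (n - i)) mod n))"
  by (rule sum.reindex_bij_witness[where j="\<lambda>k. (k + i) mod n" and i="\<lambda>a. (a + (n - i)) mod n"])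
   (use assms modback in auto)

lemma dsum: assumes "i < (n::nat)" "j < n"
  shows "(\<Sum>l<n. \<Sum>k<n. f((i+k) mod n) * m((k+l) mod n) * (g((l+j) mod n)::real))
   = (\<Sum>b<n. \<Sum>a<n. f a * m((a+b+(n-i)+(n-j)) mod n) * g b)"
proof -
  have "(\<Sum>l<n. \<Sum>k<n. f((i+k) mod n) * m((k+l) mod n) * g((l+j) mod n))
     = (\<Sum>l<n. \<Sum>a<n. f a * m(((a+(n-i)) mod n+l) mod n) * g((l+j) mod n))"
    apply (rule sum.cong[OF refl])
    apply (subst rot[OF assms(1)])
    apply (rule sum.cong[OF refl])
    using modback assms by auto
  also have "\<dots> = (\<Sum>b<n. \<Sum>a<n. f a * m(((a+(n-i)) mod n+(b+(n-j)) mod n) mod n) * g (((b+(n-j)) mod n+j) mod n))"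
    by (rule rot[OF assms(2)])
  also have "\<dots> = (\<Sum>b<n. \<Sum>a<n. f a * m(((a+(n-i)) mod n+(b+(n-j)) mod n) mod n) * g b)"
    apply (rule sum.cong[OF refl])+
    using modback assms by auto
  also have "\<dots> = (\<Sum>b<n. \<Sum>a<n. f a * m((a+b+(n-i)+(n-j)) mod n) * g b)"
    by (simp add: mod_add_eq ac_simps)
  finally show ?thesis .
qed


lemma struct: assumes "0 < n" "\<forall>i<n. \<forall>j<n. M$$((i+1) mod n, j) = M$$(i,(j+1) mod n)"
  shows "j < n \<Longrightarrow> i < n \<Longrightarrow> M$$(i,j) = M$$((i+j) mod n, 0)"
proof (induction j arbitrary: i)
  case 0 then show ?case by simp
next
  case (Suc j)
  have "M$$(i, Suc j) = M$$((i+1) mod n, j)" using assms(2) Suc.prems by simp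
  also have "\<dots> = M$$(((i+1) mod n + j) mod n, 0)" using Suc.prems assms(1) by (intro Suc.IH) auto
  also have "\<dots> = M$$((i + Suc j) mod n, 0)" by (simp add: mod_add_left_eq)
  finally show ?case .
qed

lemma tri: assumes "A \<in> carrier_mat n n" "B \<in> carrier_mat n n" "C \<in> carrier_mat n n" "i < n" "j < n"
  shows "(A*B*C)$$(i,j) = (\<Sum>l<n. \<Sum>k<n. A$$(i,k)*B$$(k,l)*C$$(l,j))"
  using assms by (simp add: scalar_prod_def sum_distrib_left lessThan_atLeast0 mult.assoc, subst sum.swap, simp)

lemma Xidx: "i < n \<Longrightarrow> j < n \<Longrightarrow> Xmat n x $$ (i,j) = x $ ((i+j) mod n)"
  "Xmat n x \<in> carrier_mat n n"
  by (auto simp: Xmat_def)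

lemma L: assumes "0 < n" "M \<in> carrier_mat n n" "\<forall>i<n. \<forall>j<n. M$$((i+1) mod n, j) = M$$(i,(j+1) mod n)"
  shows "Xmat n x * M * Xmat n y = Xmat n y * M * Xmat n x"
proof (rule eq_matI)
  fix i j assume ij: "i < dim_row (Xmat n y * M * Xmat n x)" "j < dim_col (Xmat n y * M * Xmat n x)"
  hence i: "i < n" and j: "j < n" by (auto simp: Xmat_def)
  define m where "m a = M$$(a,0)" for a
  have Ms: "k < n \<Longrightarrow> l < n \<Longrightarrow> M$$(k,l) = m ((k+l) mod n)" for k l
    unfolding m_def by (rule struct[OF assms(1,3)])
  have gen: "(Xmat n u * M * Xmat n v)$$(i,j) = (\<Sum>b<n. \<Sum>a<n. u$a * m((a+b+(n-i)+(n-j)) mod n) * v$b)" for u v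
  proof -
    have "(Xmat n u * M * Xmat n v)$$(i,j) = (\<Sum>l<n. \<Sum>k<n. u$((i+k) mod n) * m((k+l) mod n) * v$((l+j) mod n))"
      apply (subst tri[OF Xidx(2) assms(2) Xidx(2) i j])
      apply (rule sum.cong[OF refl])+
      by (simp add: Xidx(1) Ms i j)
    also have "\<dots> = (\<Sum>b<n. \<Sum>a<n. u$a * m((a+b+(n-i)+(n-j)) mod n) * v$b)"
      by (rule dsum[OF i j])
    finally show ?thesis .
  qed
  show "(Xmat n x * M * Xmat n y)$$(i,j) = (Xmat n y * M * Xmat n x)$$(i,j)"
    unfolding gen
    apply (subst sum.swap)
    apply (rule sum.cong[OF refl])+
    by (simp only: mult.commute mult.left_commute add.commute add.left_commute)
qed (auto simp: Xmat_def)

lemma delta: assumes "(c::nat) < n" shows "(\<Sum>k\<in>{0..<n}. (if k = c then 1 else 0) * f k) = (f c::real)"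
    "(\<Sum>k\<in>{0..<n}. f k * (if k = c then 1 else 0)) = (f c::real)"
proof -
  have "(\<lambda>k. (if k = c then 1 else 0) * f k) = (\<lambda>k. if k = c then f k else 0)" by auto
  thus "(\<Sum>k\<in>{0..<n}. (if k = c then 1 else 0) * f k) = (f c::real)" by (simp only: sum.delta) (use assms in simp)
  have "(\<lambda>k. f k * (if k = c then 1 else 0)) = (\<lambda>k. if k = c then f k else 0)" by auto
  thus "(\<Sum>k\<in>{0..<n}. f k * (if k = c then 1 else 0)) = (f c::real)" by (simp only: sum.delta) (use assms in simp)
qed
lemma fb_inj: assumes "X1 \<in> carrier_mat n n" "X2 \<in> carrier_mat n n" "X3 \<in> carrier_mat n n" "X4 \<in> carrier_mat n n"
  "Y1 \<in> carrier_mat n n" "Y2 \<in> carrier_mat n n" "Y3 \<in> carrier_mat n n" "Y4 \<in> carrier_mat n n"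
  and e: "four_block_mat X1 X2 X3 X4 = four_block_mat Y1 Y2 Y3 Y4"
  shows "X1 = Y1" "X2 = Y2" "X3 = Y3" "X4 = Y4"
proof -
  have E: "\<And>i j. four_block_mat X1 X2 X3 X4 $$ (i,j) = four_block_mat Y1 Y2 Y3 Y4 $$ (i,j)"
    using e by simp
  show "X1 = Y1"
  proof (rule eq_matI)
    fix i j assume "i < dim_row Y1" "j < dim_col Y1"
    with E[of i j] assms(1-8) show "X1 $$ (i,j) = Y1 $$ (i,j)" by (simp add: index_mat_four_block)
  qed (use assms in auto)
  show "X2 = Y2"
  proof (rule eq_matI)
    fix i j assume "i < dim_row Y2" "j < dim_col Y2"
    with E[of i "n+j"] assms(1-8) show "X2 $$ (i,j) = Y2 $$ (i,j)" by (simp add: index_mat_four_block)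
  qed (use assms in auto)
  show "X3 = Y3"
  proof (rule eq_matI)
    fix i j assume "i < dim_row Y3" "j < dim_col Y3"
    with E[of "n+i" j] assms(1-8) show "X3 $$ (i,j) = Y3 $$ (i,j)" by (simp add: index_mat_four_block)
  qed (use assms in auto)
  show "X4 = Y4"
  proof (rule eq_matI)
    fix i j assume "i < dim_row Y4" "j < dim_col Y4"
    with E[of "n+i" "n+j"] assms(1-8) show "X4 $$ (i,j) = Y4 $$ (i,j)" by (simp add: index_mat_four_block)
  qed (use assms in auto)
qed

lemma P_carrier: "shiftP n \<in> carrier_mat n n" by (simp add: shiftP_def)

lemma Pcond: assumes "0 < n" "B \<in> carrier_mat n n" "shiftP n * B = B * (shiftP n)\<^sup>T"
  shows "\<forall>i<n. \<forall>j<n. B$$((i+1) mod n, j) = B$$(i,(j+1) mod n)"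
proof (intro allI impI)
  fix i j assume i: "i < n" and j: "j < n"
  have "(shiftP n * B)$$(i,j) = (\<Sum>k\<in>{0..<n}. (if k = (i+1) mod n then 1 else 0) * B$$(k,j))"
    using i j assms(2) by (simp add: shiftP_def scalar_prod_def)
  also have "\<dots> = B$$((i+1) mod n, j)"
    using i by (simp add: delta)
  finally have 1: "(shiftP n * B)$$(i,j) = B$$((i+1) mod n, j)" .
  have "(B * (shiftP n)\<^sup>T)$$(i,j) = (\<Sum>k\<in>{0..<n}. B$$(i,k) * (if k = (j+1) mod n then 1 else 0))"
    using i j assms(2) by (simp add: shiftP_def scalar_prod_def)
  also have "\<dots> = B$$(i, (j+1) mod n)"
    using j by (simp add: delta)
  finally have 2: "(B * (shiftP n)\<^sup>T)$$(i,j) = B$$(i, (j+1) mod n)" .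
  show "B$$((i+1) mod n, j) = B$$(i,(j+1) mod n)" using 1 2 assms(3) by simp
qed

lemma um: "A \<in> carrier_mat n n \<Longrightarrow> Y \<in> carrier_mat n n \<Longrightarrow> (A::'a::ring mat) * - Y = - (A * Y)" "A \<in> carrier_mat n n \<Longrightarrow> Y \<in> carrier_mat n n \<Longrightarrow> - A * Y = - (A * Y)"
  by (rule uminus_mult_right_mat uminus_mult_left_mat; simp add: carrier_matD)+

lemma Jprod: fixes X Y H1 H2 H3 H4 :: "real mat" assumes c: "X \<in> carrier_mat n n" "Y \<in> carrier_mat n n"
  "H1 \<in> carrier_mat n n" "H2 \<in> carrier_mat n n" "H3 \<in> carrier_mat n n" "H4 \<in> carrier_mat n n"
  shows "four_block_mat (0\<^sub>m n n) X (-X) (0\<^sub>m n n) * four_block_mat H1 H2 H3 H4 * four_block_mat (0\<^sub>m n n) Y (-Y) (0\<^sub>m n n)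
   = four_block_mat (-(X*H4*Y)) (X*H3*Y) (X*H2*Y) (-(X*H1*Y))"
proof -
  have "four_block_mat (0\<^sub>m n n) X (-X) (0\<^sub>m n n) * four_block_mat H1 H2 H3 H4
     = four_block_mat (0\<^sub>m n n * H1 + X * H3) (0\<^sub>m n n * H2 + X * H4) (-X * H1 + 0\<^sub>m n n * H3) (-X * H2 + 0\<^sub>m n n * H4)"
    by (rule mult_four_block_mat) (use c in auto)
  also have "\<dots> = four_block_mat (X*H3) (X*H4) (-(X*H1)) (-(X*H2))"
    using c by (intro cong_four_block_mat) (auto simp: um carrier_matD)
  finally have 1: "four_block_mat (0\<^sub>m n n) X (-X) (0\<^sub>m n n) * four_block_mat H1 H2 H3 H4
     = four_block_mat (X*H3) (X*H4) (-(X*H1)) (-(X*H2))" .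
  have "four_block_mat (X*H3) (X*H4) (-(X*H1)) (-(X*H2)) * four_block_mat (0\<^sub>m n n) Y (-Y) (0\<^sub>m n n)
     = four_block_mat (X*H3*0\<^sub>m n n + X*H4*(-Y)) (X*H3*Y + X*H4*0\<^sub>m n n) (-(X*H1)*0\<^sub>m n n + -(X*H2)*(-Y)) (-(X*H1)*Y + -(X*H2)*0\<^sub>m n n)"
    by (rule mult_four_block_mat) (use c in auto)
  also have "\<dots> = four_block_mat (-(X*H4*Y)) (X*H3*Y) (X*H2*Y) (-(X*H1*Y))"
    using c by (intro cong_four_block_mat) (auto simp: um carrier_matD)
  finally show ?thesis using 1 by simp
qed

theorem mainTheorem19:
  fixes n :: nat and H :: "real mat" and x y :: "real vec"
  assumes "n \<ge> 2"
    and "admissible_hessian n H"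
    and "x \<in> carrier_vec (2*n)" and "y \<in> carrier_vec (2*n)"
  shows "Jmat n x * H * Jmat n y = Jmat n y * H * Jmat n x"
proof -
  have n: "0 < n" using assms(1) by simp
  have Hc: "H \<in> carrier_mat (2*n) (2*n)" and AH: "Amat n * H = H * (Amat n)\<^sup>T"
    using assms(2) unfolding admissible_hessian_def by auto
  obtain H1 H2 H3 H4 where sb: "split_block H n n = (H1,H2,H3,H4)" by (cases "split_block H n n") auto
  have dims: "dim_row H = n + n" "dim_col H = n + n" using Hc by auto
  note S = split_block[OF sb dims]
  note c = S(1-4)
  have P: "shiftP n \<in> carrier_mat n n" by (rule P_carrier)
  have PT: "(shiftP n)\<^sup>T \<in> carrier_mat n n" using P by simp
  have AT: "(Amat n)\<^sup>T = four_block_mat (shiftP n)\<^sup>T (0\<^sub>m n n) (0\<^sub>m n n) (shiftP n)\<^sup>T"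
    unfolding Amat_def using P by (subst transpose_four_block_mat) auto
  have L1: "Amat n * H = four_block_mat (shiftP n * H1) (shiftP n * H2) (shiftP n * H3) (shiftP n * H4)"
    unfolding Amat_def S(5) using P c
    by (subst mult_four_block_mat[of _ n n _ n _ n _ _ n _ n]) auto
  have R1: "H * (Amat n)\<^sup>T = four_block_mat (H1 * (shiftP n)\<^sup>T) (H2 * (shiftP n)\<^sup>T) (H3 * (shiftP n)\<^sup>T) (H4 * (shiftP n)\<^sup>T)"
    unfolding AT S(5) using PT c
    by (subst mult_four_block_mat[of _ n n _ n _ n _ _ n _ n]) auto
  have E: "four_block_mat (shiftP n * H1) (shiftP n * H2) (shiftP n * H3) (shiftP n * H4)
     = four_block_mat (H1 * (shiftP n)\<^sup>T) (H2 * (shiftP n)\<^sup>T) (H3 * (shiftP n)\<^sup>T) (H4 * (shiftP n)\<^sup>T)"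
    using AH L1 R1 by simp
  note F = fb_inj[OF _ _ _ _ _ _ _ _ E]
  have Q: "\<And>B. B \<in> carrier_mat n n \<Longrightarrow> shiftP n * B = B * (shiftP n)\<^sup>T \<Longrightarrow>
     Xmat n x * B * Xmat n y = Xmat n y * B * Xmat n x"
    by (rule L[OF n], assumption, rule Pcond[OF n], assumption+)
  have q1: "Xmat n x * H1 * Xmat n y = Xmat n y * H1 * Xmat n x"
    by (rule Q[OF c(1) F(1)]) (use P PT c in auto)
  have q2: "Xmat n x * H2 * Xmat n y = Xmat n y * H2 * Xmat n x"
    by (rule Q[OF c(2) F(2)]) (use P PT c in auto)
  have q3: "Xmat n x * H3 * Xmat n y = Xmat n y * H3 * Xmat n x"
    by (rule Q[OF c(3) F(3)]) (use P PT c in auto)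
  have q4: "Xmat n x * H4 * Xmat n y = Xmat n y * H4 * Xmat n x"
    by (rule Q[OF c(4) F(4)]) (use P PT c in auto)
  show ?thesis
    unfolding Jmat_def S(5)
    using Jprod[OF Xidx(2) Xidx(2) c, of x y] Jprod[OF Xidx(2) Xidx(2) c, of y x] q1 q2 q3 q4
    by simp
qed

end
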